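(* Let $f:[0,\infty)\to\mathbb{C}$ be smooth with support in $[0,\rho]$ for some $\rho<1$. For $i,j\in\mathbb{N}_0$ and $t\in(0,1)$ let $$G_{i,j}(t)=\int_{1-t}^{1}u f(u)\,[Q(t,u)]^{i}\,(u^{2}+1-t^{2})^{j}\,\mathrm{d}u,\qquad Q(t,u)=((1+t)^2-u^2)(u^2-(1-t)^2).$$ Then for every $r\in\mathbb{N}_0$ and every $m\in\mathbb{N}_0$, $$\sum_{l=0}^{\lfloor r/2\rfloor}\frac{2^{2l}\,r!}{l!\,(r-2l)!}\frac{(m+r)!}{(m+r-l)!}\,[D^{r-2l}G_{m+r-l,0}](t)=4^{r}(m+1)\cdots(m+r)\,G_{m,r}(t),\qquad t\in(0,1).$$
   Context: $D$ denotes the operator $(D\varphi)(t)=\frac{1}{t}\varphi'(t)$ and $D^{j}$ its $j$-fold iterate ($D^0$ the identity); $\lfloor\cdot\rfloor$ is the floor function; the empty product $(m+1)\cdots(m+r)$ for $r=0$ equals $1$. *)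

theory Defs
  imports "HOL-Analysis.Analysis"
begin

definition smooth_on_nonneg :: "(real \<Rightarrow> complex) \<Rightarrow> bool" where
  "smooth_on_nonneg f \<longleftrightarrow>
     (\<exists>Df :: nat \<Rightarrow> real \<Rightarrow> complex. Df 0 = f \<and>
        (\<forall>k. \<forall>x\<ge>0. (Df k has_vector_derivative Df (Suc k) x) (at x within {0..})))"

definition Qfun :: "real \<Rightarrow> real \<Rightarrow> real" where
  "Qfun t u = ((1 + t)^2 - u^2) * (u^2 - (1 - t)^2)"

definition Gfun :: "(real \<Rightarrow> complex) \<Rightarrow> nat \<Rightarrow> nat \<Rightarrow> real \<Rightarrow> complex" where
  "Gfun f i j t = integral {1 - t..1}
     (\<lambda>u. complex_of_real u * f u * complex_of_real (Qfun t u) ^ i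
           * complex_of_real (u^2 + 1 - t^2) ^ j)"

definition Dop :: "(real \<Rightarrow> complex) \<Rightarrow> real \<Rightarrow> complex" where
  "Dop \<phi> t = vector_derivative \<phi> (at t) / complex_of_real t"

end

theory Submission
  imports Defs "HOL-Computational_Algebra.Polynomial"
begin
lemma int_lower_deriv:
  fixes h :: "real \<Rightarrow> complex"
  assumes h: "continuous_on {0..1} h" and t: "0 < t" "t < 1"
  shows "((\<lambda>s. integral {1-s..1} h) has_vector_derivative h (1-t)) (at t)"
proof -
  have d0: "((\<lambda>x. integral {0..x} h) has_vector_derivative h (1-t)) (at (1-t))"
  proof -
    have "((\<lambda>x. integral {0..x} h) has_vector_derivative h (1-t)) (at (1-t) within {0..1})"
      using integral_has_vector_derivative[OF h, of "1-t"] t by auto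
    then have "((\<lambda>x. integral {0..x} h) has_vector_derivative h (1-t)) (at (1-t) within {0<..<1})"
      by (rule has_vector_derivative_within_subset) auto
    moreover have "at (1-t) within {0<..<1} = at (1-t)"
      by (rule at_within_open) (use t in auto)
    ultimately show ?thesis by simp
  qed
  have d1: "((\<lambda>s. 1 - s) has_vector_derivative (-1)) (at t)"
    by (auto intro!: derivative_eq_intros)
  have "(((\<lambda>x. integral {0..x} h) \<circ> (\<lambda>s. 1 - s)) has_vector_derivative (-1) *\<^sub>R h (1-t)) (at t)"
    using vector_diff_chain_at[OF d1] d0 by simp
  then have "((\<lambda>s. integral {0..1} h - integral {0..1-s} h) has_vector_derivative h (1-t)) (at t)"
    by (auto intro!: derivative_eq_intros simp: o_def)
  then show ?thesis
  proof (rule has_vector_derivative_transform_within_open[where S="{0<..<1}"])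
    fix y :: real assume y: "y \<in> {0<..<1}"
    have "integral {0..1-y} h + integral {1-y..1} h = integral {0..1} h"
      by (rule Henstock_Kurzweil_Integration.integral_combine) (use y h in \<open>auto intro: integrable_continuous_real\<close>)
    then show "integral {0..1} h - integral {0..1 - y} h = integral {1 - y..1} h"
      by (simp add: algebra_simps)
  qed (use t in auto)
qed




lemma deriv_int:
  fixes w :: "real \<Rightarrow> complex" and c :: "nat \<Rightarrow> real \<Rightarrow> real" and g g' :: "real \<Rightarrow> real \<Rightarrow> real"
  assumes w: "continuous_on {0..1} w"
    and c: "\<And>k. continuous_on {0..1} (c k)"
    and rep: "\<And>t u. g t u = (\<Sum>k\<le>N. c k u * t^k)"
    and dg: "\<And>x u. ((\<lambda>s. g s u) has_real_derivative g' x u) (at x)"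
    and bd: "g t (1-t) = 0" and t: "0<t" "t<1"
  shows "((\<lambda>s. integral {1-s..1} (\<lambda>u. g s u *\<^sub>R w u)) has_vector_derivative
            integral {1-t..1} (\<lambda>u. g' t u *\<^sub>R w u)) (at t)"
proof -
  define h where "h k u = c k u *\<^sub>R w u" for k u
  have hc: "continuous_on {0..1} (h k)" for k
    unfolding h_def by (intro continuous_intros c w)
  have hi: "h k integrable_on {1-s..1}" if "0 < s" "s < 1" for k s
    by (rule integrable_continuous_real, rule continuous_on_subset[OF hc]) (use that in auto)
  have eq: "integral {1-s..1} (\<lambda>u. g s u *\<^sub>R w u) = (\<Sum>k\<le>N. s^k *\<^sub>R integral {1-s..1} (h k))"
    if s: "s \<in> {0<..<1}" for s
  proof -
    have "integral {1-s..1} (\<lambda>u. g s u *\<^sub>R w u) = integral {1-s..1} (\<lambda>u. \<Sum>k\<le>N. s^k *\<^sub>R h k u)"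
      by (simp add: rep h_def scaleR_sum_left mult.commute)
    also have "\<dots> = (\<Sum>k\<le>N. integral {1-s..1} (\<lambda>u. s^k *\<^sub>R h k u))"
      using s by (intro integral_sum) (auto intro: integrable_cmul hi)
    also have "\<dots> = (\<Sum>k\<le>N. s^k *\<^sub>R integral {1-s..1} (h k))"
      by simp
    finally show ?thesis .
  qed
  have D: "((\<lambda>s. \<Sum>k\<le>N. s^k *\<^sub>R integral {1-s..1} (h k)) has_vector_derivative
      (\<Sum>k\<le>N. t^k *\<^sub>R h k (1-t) + (real k * t^(k - Suc 0)) *\<^sub>R integral {1-t..1} (h k))) (at t)"
    by (intro has_vector_derivative_sum has_vector_derivative_scaleR DERIV_pow int_lower_deriv hc t)
  have v1: "(\<Sum>k\<le>N. t^k *\<^sub>R h k (1-t)) = 0"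
  proof -
    have "(\<Sum>k\<le>N. t^k *\<^sub>R h k (1-t)) = g t (1-t) *\<^sub>R w (1-t)"
      by (simp add: rep h_def scaleR_sum_left mult.commute)
    then show ?thesis using bd by simp
  qed
  have pw: "g' t u = (\<Sum>k\<le>N. c k u * (real k * t^(k - Suc 0)))" for u
  proof -
    have "((\<lambda>t. \<Sum>k\<le>N. c k u * t^k) has_real_derivative (\<Sum>k\<le>N. c k u * (real k * t^(k - Suc 0)))) (at t)"
      by (intro DERIV_sum DERIV_cmult DERIV_pow)
    moreover have "((\<lambda>t. \<Sum>k\<le>N. c k u * t^k) has_real_derivative g' t u) (at t)"
    proof -
      have "(\<lambda>t. g t u) = (\<lambda>t. \<Sum>k\<le>N. c k u * t^k)" by (simp add: rep)
      then show ?thesis using dg[where x=t and u=u] by simp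
    qed
    ultimately show ?thesis using DERIV_unique by blast
  qed
  have v2: "(\<Sum>k\<le>N. (real k * t^(k - Suc 0)) *\<^sub>R integral {1-t..1} (h k))
            = integral {1-t..1} (\<lambda>u. g' t u *\<^sub>R w u)"
  proof -
    have "(\<Sum>k\<le>N. (real k * t^(k - Suc 0)) *\<^sub>R integral {1-t..1} (h k))
       = (\<Sum>k\<le>N. integral {1-t..1} (\<lambda>u. (real k * t^(k - Suc 0)) *\<^sub>R h k u))"
      by simp
    also have "\<dots> = integral {1-t..1} (\<lambda>u. \<Sum>k\<le>N. (real k * t^(k - Suc 0)) *\<^sub>R h k u)"
      using t by (intro integral_sum[symmetric]) (auto intro: integrable_cmul hi)
    also have "\<dots> = integral {1-t..1} (\<lambda>u. g' t u *\<^sub>R w u)"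
      by (simp add: pw h_def scaleR_sum_left mult.commute)
    finally show ?thesis .
  qed
  from D have "((\<lambda>s. \<Sum>k\<le>N. s^k *\<^sub>R integral {1-s..1} (h k)) has_vector_derivative
      integral {1-t..1} (\<lambda>u. g' t u *\<^sub>R w u)) (at t)"
    using v1 v2 by (simp add: sum.distrib)
  then show ?thesis
    by (rule has_vector_derivative_transform_within_open[where S="{0<..<1}"]) (use t eq in auto)
qed



definition Qp :: "real \<Rightarrow> real poly" where
  "Qp u = [: -(u^4) + 2*u^2 - 1, 0, 2*u^2 + 2, 0, -1 :]"
definition Pp :: "real \<Rightarrow> real poly" where
  "Pp u = [: u^2 + 1, 0, -1 :]"

lemma poly_Qp: "poly (Qp u) t = Qfun t u"
  by (simp add: Qp_def Qfun_def algebra_simps power2_eq_square power4_eq_xxxx)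

lemma poly_Pp: "poly (Pp u) t = u^2 + 1 - t^2"
  by (simp add: Pp_def algebra_simps power2_eq_square)

definition cc :: "(real \<Rightarrow> real poly) \<Rightarrow> bool" where
  "cc p \<longleftrightarrow> (\<forall>k. continuous_on UNIV (\<lambda>u. coeff (p u) k))"

lemma cc_0: "cc (\<lambda>u. 0)" by (simp add: cc_def)

lemma cc_pCons: "continuous_on UNIV a \<Longrightarrow> cc p \<Longrightarrow> cc (\<lambda>u. pCons (a u) (p u))"
  unfolding cc_def
proof (intro allI)
  fix k assume "continuous_on UNIV a" "\<forall>k. continuous_on UNIV (\<lambda>u. coeff (p u) k)"
  then show "continuous_on UNIV (\<lambda>u. coeff (pCons (a u) (p u)) k)" by (cases k) auto
qed

lemma cc_mult: "cc p \<Longrightarrow> cc q \<Longrightarrow> cc (\<lambda>u. p u * q u)"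
  unfolding cc_def coeff_mult by (auto intro!: continuous_intros)

lemma cc_power: "cc p \<Longrightarrow> cc (\<lambda>u. p u ^ n)"
proof (induction n)
  case 0
  have "cc (\<lambda>u. pCons 1 0)" by (intro cc_pCons cc_0) auto
  then show ?case by (simp add: one_pCons[symmetric])
next
  case (Suc n) then show ?case using cc_mult[of p "\<lambda>u. p u ^ n"] by simp
qed

lemma cc_Qp: "cc Qp"
  unfolding Qp_def by (intro cc_pCons cc_0 continuous_intros)

lemma cc_Pp: "cc Pp"
  unfolding Pp_def by (intro cc_pCons cc_0 continuous_intros)

lemma deg_Qp: "degree (Qp u) \<le> 4"
  unfolding Qp_def by (rule order_trans[OF degree_pCons_le], simp)+ 

lemma deg_Pp: "degree (Pp u) \<le> 2"
  unfolding Pp_def by (rule order_trans[OF degree_pCons_le], simp)+ 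

lemma poly_sum_N: fixes p :: "real poly" assumes "degree p \<le> N" shows "poly p x = (\<Sum>k\<le>N. coeff p k * x^k)"
  unfolding poly_altdef by (rule sum.mono_neutral_left) (use assms in \<open>auto intro: coeff_eq_0\<close>)

lemma rep_QP: "\<exists>c. (\<forall>k. continuous_on {0..1} (c k)) \<and>
   (\<forall>s u. Qfun s u ^ a * (u^2+1-s^2)^b = (\<Sum>k\<le>4*a+2*b. c k u * s^k))"
proof (intro exI conjI allI)
  let ?p = "\<lambda>u. Qp u ^ a * Pp u ^ b"
  have "cc ?p" by (intro cc_mult cc_power cc_Qp cc_Pp)
  then show "continuous_on {0..1} (\<lambda>u. coeff (?p u) k)" for k
    unfolding cc_def by (auto intro: continuous_on_subset)
  fix s u
  have "degree (?p u) \<le> 4*a+2*b"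
  proof -
    have "degree (?p u) \<le> degree (Qp u ^ a) + degree (Pp u ^ b)" by (rule degree_mult_le)
    also have "\<dots> \<le> degree (Qp u) * a + degree (Pp u) * b"
      by (intro add_mono degree_power_le)
    also have "\<dots> \<le> 4*a+2*b" using deg_Qp[of u] deg_Pp[of u]
      by (intro add_mono) (auto intro: mult_right_mono)
    finally show ?thesis .
  qed
  then have "poly (?p u) s = (\<Sum>k\<le>4*a+2*b. coeff (?p u) k * s^k)" by (rule poly_sum_N)
  then show "Qfun s u ^ a * (u^2+1-s^2)^b = (\<Sum>k\<le>4*a+2*b. coeff (?p u) k * s^k)"
    by (simp add: poly_Qp poly_Pp)
qed

lemma Gfun_eq: "Gfun f a b s = integral {1-s..1}
   (\<lambda>u. (Qfun s u ^ a * (u^2+1-s^2)^b) *\<^sub>R (complex_of_real u * f u))"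
  unfolding Gfun_def by (simp add: scaleR_conv_of_real mult_ac)

lemma dQ: "((\<lambda>s. Qfun s u) has_real_derivative 4*x*(u^2+1-x^2)) (at x)"
  unfolding Qfun_def
  by (rule derivative_eq_intros refl)+ (simp add: algebra_simps power2_eq_square)



lemma DG:
  assumes f: "continuous_on {0..1} f" and a: "1 \<le> a" and t: "0 < t" "t < 1"
  shows "(Gfun f a b has_vector_derivative
     (complex_of_real t * (complex_of_real (4 * real a) * Gfun f (a-1) (b+1) t
        - complex_of_real (2 * real b) * Gfun f a (b-1) t))) (at t)"
proof -
  define w where "w u = complex_of_real u * f u" for u
  have w: "continuous_on {0..1} w" unfolding w_def by (intro continuous_intros f)
  define g where "g s u = Qfun s u ^ a * (u^2+1-s^2)^b" for s u
  define g1 where "g1 u = Qfun t u ^ (a-1) * (u^2+1-t^2)^(b+1)" for u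
  define g2 where "g2 u = Qfun t u ^ a * (u^2+1-t^2)^(b-1)" for u
  define g' where "g' x u = x * (4 * real a * (Qfun x u ^ (a-1) * (u^2+1-x^2)^(b+1))
      - 2 * real b * (Qfun x u ^ a * (u^2+1-x^2)^(b-1)))" for x u
  obtain c where c: "\<And>k. continuous_on {0..1} (c k)"
    and rep: "\<And>s u. g s u = (\<Sum>k\<le>4*a+2*b. c k u * s^k)"
    using rep_QP[of a b] unfolding g_def by blast
  have dg: "((\<lambda>s. g s u) has_real_derivative g' x u) (at x)" for x u
  proof -
    obtain a' where a': "a = Suc a'" using a by (cases a) auto
    have "((\<lambda>s. g s u) has_real_derivative
       (of_nat a * ((4*x*(u^2+1-x^2)) * Qfun x u ^ (a - Suc 0))) * (u^2+1-x^2)^b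
       + (of_nat b * ((-(2*x)) * (u^2+1-x^2)^(b - Suc 0))) * Qfun x u ^ a) (at x)"
      unfolding g_def
      by (rule derivative_eq_intros dQ refl)+ (simp add: power2_eq_square)
    moreover have "(of_nat a * ((4*x*(u^2+1-x^2)) * Qfun x u ^ (a - Suc 0))) * (u^2+1-x^2)^b
       + (of_nat b * ((-(2*x)) * (u^2+1-x^2)^(b - Suc 0))) * Qfun x u ^ a = g' x u"
      unfolding g'_def by (simp add: algebra_simps)
    ultimately show ?thesis by simp
  qed
  have bd: "g t (1-t) = 0"
    using a by (simp add: g_def Qfun_def power2_eq_square algebra_simps)
  have D1: "((\<lambda>s. integral {1-s..1} (\<lambda>u. g s u *\<^sub>R w u)) has_vector_derivative
            integral {1-t..1} (\<lambda>u. g' t u *\<^sub>R w u)) (at t)"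
    by (rule deriv_int[OF w c rep dg bd t])
  have cont: "continuous_on {1-t..1} (\<lambda>u. Qfun t u ^ p * (u^2+1-t^2)^q)" for p q
    unfolding Qfun_def by (intro continuous_intros)
  have wc: "continuous_on {1-t..1} w" by (rule continuous_on_subset[OF w]) (use t in auto)
  have int: "(\<lambda>u. (Qfun t u ^ p * (u^2+1-t^2)^q) *\<^sub>R w u) integrable_on {1-t..1}" for p q
    by (intro integrable_continuous_real continuous_intros cont wc)
  have "integral {1-t..1} (\<lambda>u. g' t u *\<^sub>R w u) =
     integral {1-t..1} (\<lambda>u. (t * 4 * real a) *\<^sub>R ((Qfun t u ^ (a-1) * (u^2+1-t^2)^(b+1)) *\<^sub>R w u)
        - (t * 2 * real b) *\<^sub>R ((Qfun t u ^ a * (u^2+1-t^2)^(b-1)) *\<^sub>R w u))"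
    by (rule integral_cong) (simp add: g'_def algebra_simps)
  also have "\<dots> = (t * 4 * real a) *\<^sub>R integral {1-t..1} (\<lambda>u. (Qfun t u ^ (a-1) * (u^2+1-t^2)^(b+1)) *\<^sub>R w u)
     - (t * 2 * real b) *\<^sub>R integral {1-t..1} (\<lambda>u. (Qfun t u ^ a * (u^2+1-t^2)^(b-1)) *\<^sub>R w u)"
    by (simp only: integral_diff[OF integrable_cmul[OF int] integrable_cmul[OF int]] integral_cmul)
  also have "\<dots> = (t * 4 * real a) *\<^sub>R Gfun f (a-1) (b+1) t - (t * 2 * real b) *\<^sub>R Gfun f a (b-1) t"
    by (simp only: Gfun_eq w_def)
  also have "\<dots> = complex_of_real t * (complex_of_real (4 * real a) * Gfun f (a-1) (b+1) t
        - complex_of_real (2 * real b) * Gfun f a (b-1) t)"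
    by (simp add: scaleR_conv_of_real algebra_simps)
  finally have "integral {1-t..1} (\<lambda>u. g' t u *\<^sub>R w u) = \<dots>" .
  moreover have "Gfun f a b = (\<lambda>s. integral {1-s..1} (\<lambda>u. g s u *\<^sub>R w u))"
    by (simp add: fun_eq_iff Gfun_eq g_def w_def)
  ultimately show ?thesis using D1 by simp
qed



inductive spanG :: "(real \<Rightarrow> complex) \<Rightarrow> nat \<Rightarrow> (real \<Rightarrow> complex) \<Rightarrow> bool" for f where
  base: "n \<le> a \<Longrightarrow> spanG f n (\<lambda>t. c * Gfun f a b t)"
| add: "spanG f n \<phi> \<Longrightarrow> spanG f n \<psi> \<Longrightarrow> spanG f n (\<lambda>t. \<phi> t + \<psi> t)"
| cong: "spanG f n \<phi> \<Longrightarrow> (\<And>t. t \<in> {0<..<1} \<Longrightarrow> \<psi> t = \<phi> t) \<Longrightarrow> spanG f n \<psi>"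

lemma span_deriv:
  assumes f: "continuous_on {0..1} f"
  shows "spanG f m \<phi> \<Longrightarrow> m = Suc n \<Longrightarrow> \<exists>\<psi>. spanG f n \<psi> \<and>
      (\<forall>t\<in>{0<..<1}. (\<phi> has_vector_derivative complex_of_real t * \<psi> t) (at t))"
proof (induction m \<phi> arbitrary: n rule: spanG.induct)
  case (base m a c b)
  let ?\<psi> = "\<lambda>t. (c * complex_of_real (4 * real a)) * Gfun f (a-1) (b+1) t
     + (- (c * complex_of_real (2 * real b))) * Gfun f a (b-1) t"
  have "spanG f n ?\<psi>" using base by (intro spanG.add spanG.base) auto
  moreover have "((\<lambda>t. c * Gfun f a b t) has_vector_derivative complex_of_real t * ?\<psi> t) (at t)"
    if t: "t \<in> {0<..<1}" for t
  proof -
    have "((\<lambda>t. c * Gfun f a b t) has_vector_derivative c * (complex_of_real t * (complex_of_real (4 * real a) * Gfun f (a-1) (b+1) t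
        - complex_of_real (2 * real b) * Gfun f a (b-1) t))) (at t)"
      using base t by (intro has_vector_derivative_mult_right DG f) auto
    then show ?thesis by (simp add: algebra_simps)
  qed
  ultimately show ?case by blast
next
  case (add m \<phi>1 \<phi>2)
  from add.IH(1)[OF add.prems] obtain \<psi>1 where 1: "spanG f n \<psi>1"
    "\<forall>t\<in>{0<..<1}. (\<phi>1 has_vector_derivative complex_of_real t * \<psi>1 t) (at t)" by blast
  from add.IH(2)[OF add.prems] obtain \<psi>2 where 2: "spanG f n \<psi>2"
    "\<forall>t\<in>{0<..<1}. (\<phi>2 has_vector_derivative complex_of_real t * \<psi>2 t) (at t)" by blast
  have "spanG f n (\<lambda>t. \<psi>1 t + \<psi>2 t)" using 1 2 by (intro spanG.add)
  moreover have "\<forall>t\<in>{0<..<1}. ((\<lambda>t. \<phi>1 t + \<phi>2 t) has_vector_derivative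
     complex_of_real t * (\<psi>1 t + \<psi>2 t)) (at t)"
    using 1 2 by (auto simp: distrib_left intro!: has_vector_derivative_add)
  ultimately show ?case by blast
next
  case (cong m \<phi> \<psi>')
  from cong.IH[OF cong.prems] obtain \<psi> where 1: "spanG f n \<psi>"
    "\<forall>t\<in>{0<..<1}. (\<phi> has_vector_derivative complex_of_real t * \<psi> t) (at t)" by blast
  have "\<forall>t\<in>{0<..<1}. (\<psi>' has_vector_derivative complex_of_real t * \<psi> t) (at t)"
  proof
    fix t :: real assume t: "t \<in> {0<..<1}"
    show "(\<psi>' has_vector_derivative complex_of_real t * \<psi> t) (at t)"
      by (rule has_vector_derivative_transform_within_open[where S="{0<..<1}"])
         (use 1 t cong.hyps(2) in auto)
  qed
  then show ?case using 1 by blast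
qed

lemma Dop_eq:
  assumes "(\<phi> has_vector_derivative complex_of_real t * d) (at t)" "t \<noteq> 0"
  shows "Dop \<phi> t = d"
  using assms by (simp add: Dop_def vector_derivative_at)

lemma span_Dop:
  assumes f: "continuous_on {0..1} f" and sp: "spanG f (Suc n) \<phi>"
  shows "spanG f n (Dop \<phi>) \<and> (\<forall>t\<in>{0<..<1}. (\<phi> has_vector_derivative complex_of_real t * Dop \<phi> t) (at t))"
proof -
  obtain \<psi> where 1: "spanG f n \<psi>"
    "\<forall>t\<in>{0<..<1}. (\<phi> has_vector_derivative complex_of_real t * \<psi> t) (at t)"
    using span_deriv[OF f sp refl] by blast
  have eq: "Dop \<phi> t = \<psi> t" if "t \<in> {0<..<1}" for t
    using 1(2) that by (intro Dop_eq) auto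
  show ?thesis using 1 eq by (auto intro: spanG.cong)
qed

lemma span_iter:
  assumes f: "continuous_on {0..1} f" and sp: "spanG f n \<phi>"
  shows "k \<le> n \<Longrightarrow> spanG f (n-k) ((Dop^^k) \<phi>)"
proof (induction k)
  case 0 then show ?case using sp by simp
next
  case (Suc k)
  then have "spanG f (Suc (n - Suc k)) ((Dop^^k) \<phi>)" by (simp add: Suc_diff_Suc)
  then show ?case using span_Dop[OF f] by simp
qed

lemma span_G0: "spanG f i (Gfun f i 0)"
  using spanG.base[of i i f 1 0] by (auto intro: spanG.cong)

lemma Dop_sum:
  assumes "finite L" "\<And>l. l \<in> L \<Longrightarrow> (\<phi> l has_vector_derivative complex_of_real t * Dop (\<phi> l) t) (at t)"
    and "t \<noteq> 0"
  shows "Dop (\<lambda>s. \<Sum>l\<in>L. c l * \<phi> l s) t = (\<Sum>l\<in>L. c l * Dop (\<phi> l) t)"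
proof (rule Dop_eq[OF _ assms(3)])
  have "((\<lambda>s. \<Sum>l\<in>L. c l * \<phi> l s) has_vector_derivative (\<Sum>l\<in>L. c l * (complex_of_real t * Dop (\<phi> l) t))) (at t)"
    using assms by (intro has_vector_derivative_sum has_vector_derivative_mult_right) auto
  then show "((\<lambda>s. \<Sum>l\<in>L. c l * \<phi> l s) has_vector_derivative complex_of_real t * (\<Sum>l\<in>L. c l * Dop (\<phi> l) t)) (at t)"
    by (simp add: sum_distrib_left mult_ac)
qed

lemma Dop_cong:
  assumes "(\<phi> has_vector_derivative complex_of_real t * d) (at t)" "t \<in> {0<..<1}"
    "\<And>s. s \<in> {0<..<1} \<Longrightarrow> \<psi> s = \<phi> s"
  shows "Dop \<psi> t = d"
proof (rule Dop_eq)
  show "(\<psi> has_vector_derivative complex_of_real t * d) (at t)"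
    by (rule has_vector_derivative_transform_within_open[OF assms(1), where S="{0<..<1}"]) (use assms in auto)
qed (use assms in auto)



definition cf :: "nat \<Rightarrow> nat \<Rightarrow> nat \<Rightarrow> real" where
  "cf r m l = 2 ^ (2 * l) * fact r / (fact l * fact (r - 2 * l)) * fact (m + r) / fact (m + r - l)"

lemma cf_case2: "cf (Suc (Suc (Suc (2*j + p)))) m (Suc j) = cf (Suc (Suc (2*j + p))) (Suc m) (Suc j)
   + 8 * real (Suc (Suc (2*j+p))) * real (m + Suc (Suc (2*j+p)) + 1) * cf (Suc (2*j+p)) (Suc m) j"
proof -
  have e1: "Suc (Suc (Suc (2*j + p))) - 2 * Suc j = Suc p" by simp
  have e2: "Suc (Suc (2*j + p)) - 2 * Suc j = p" by simp
  have e3: "Suc (2*j + p) - 2 * j = Suc p" by simp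
  have e4: "m + Suc (Suc (Suc (2*j + p))) - Suc j = Suc (Suc (m + j + p))" by simp
  have e5: "Suc m + Suc (Suc (2*j + p)) - Suc j = Suc (Suc (m + j + p))" by simp
  have e6: "Suc m + Suc (2*j + p) - j = Suc (Suc (m + j + p))" by simp
  define a where "a = (fact (Suc (2*j+p)) :: real)"
  define F where "F = (fact (Suc m + Suc (2*j+p)) :: real)"
  define E where "E = (fact (Suc (Suc (m + j + p))) :: real)"
  define J where "J = (fact j :: real)"
  define P where "P = (fact p :: real)"
  define x where "x = (2::real) ^ (2*j)"
  define jj where "jj = real j + 1"
  define pp where "pp = real p + 1"
  have f1: "(fact (Suc (Suc (Suc (2*j+p)))) :: real) = real (2*j+p+3) * real (2*j+p+2) * a"
    unfolding a_def by (simp add: fact_Suc del: of_nat_Suc)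
  have f2: "(fact (Suc (Suc (2*j+p))) :: real) = real (2*j+p+2) * a"
    unfolding a_def by (simp add: fact_Suc del: of_nat_Suc)
  have f3: "(fact (Suc j) :: real) = jj * J" unfolding J_def jj_def by simp
  have f4: "(fact (Suc p) :: real) = pp * P" unfolding P_def pp_def by simp
  have f5: "(fact (m + Suc (Suc (Suc (2*j+p)))) :: real) = real (m+2*j+p+3) * F"
    unfolding F_def by (simp add: fact_Suc del: of_nat_Suc)
  have f6: "(fact (Suc m + Suc (Suc (2*j+p))) :: real) = real (m+2*j+p+3) * F"
    unfolding F_def by (simp add: fact_Suc del: of_nat_Suc)
  have f7: "(2::real) ^ (2 * Suc j) = 4 * x" unfolding x_def by simp
  have pos: "a > 0" "F > 0" "E > 0" "J > 0" "P > 0" "x > 0" "jj > 0" "pp > 0"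
    unfolding jj_def pp_def a_def F_def E_def J_def P_def x_def by auto
  show ?thesis
    unfolding cf_def e1 e2 e3 e4 e5 e6 f1 f2 f3 f4 f5 f6 f7
    unfolding a_def[symmetric] F_def[symmetric] E_def[symmetric] J_def[symmetric] P_def[symmetric] x_def[symmetric]
    using pos apply (simp add: field_simps)
    apply (simp add: jj_def pp_def algebra_simps)
    done
qed

lemma cf_case3: "cf (Suc (Suc (2*j))) m (Suc j) = 
   8 * real (Suc (2*j)) * real (m + Suc (2*j) + 1) * cf (2*j) (Suc m) j"
proof -
  have e1: "Suc (Suc (2*j)) - 2 * Suc j = 0" by simp
  have e3: "2*j - 2 * j = 0" by simp
  have e4: "m + Suc (Suc (2*j)) - Suc j = Suc (m + j)" by simp
  have e6: "Suc m + 2*j - j = Suc (m + j)" by simp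
  define a where "a = (fact (2*j) :: real)"
  define F where "F = (fact (Suc m + 2*j) :: real)"
  define E where "E = (fact (Suc (m + j)) :: real)"
  define J where "J = (fact j :: real)"
  define x where "x = (2::real) ^ (2*j)"
  define jj where "jj = real j + 1"
  have f1: "(fact (Suc (Suc (2*j))) :: real) = real (2*j+2) * real (2*j+1) * a"
    unfolding a_def by (simp add: fact_Suc del: of_nat_Suc)
  have f3: "(fact (Suc j) :: real) = jj * J" unfolding J_def jj_def by simp
  have f5: "(fact (m + Suc (Suc (2*j))) :: real) = real (m+2*j+2) * F"
    unfolding F_def by (simp add: fact_Suc del: of_nat_Suc)
  have f7: "(2::real) ^ (2 * Suc j) = 4 * x" unfolding x_def by simp
  have pos: "a > 0" "F > 0" "E > 0" "J > 0" "x > 0" "jj > 0"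
    unfolding jj_def a_def F_def E_def J_def x_def by auto
  show ?thesis
    unfolding cf_def e1 e3 e4 e6 f1 f3 f5 f7
    unfolding a_def[symmetric] F_def[symmetric] E_def[symmetric] J_def[symmetric] x_def[symmetric]
    using pos apply (simp add: field_simps)
    apply (simp add: jj_def algebra_simps)
    done
qed




lemma cf_rec:
  assumes l: "l \<le> Suc r div 2"
  shows "cf (Suc r) m l = (if l \<le> r div 2 then cf r (Suc m) l else 0)
     + (if 1 \<le> l then 8 * real r * real (m + r + 1) * cf (r - 1) (Suc m) (l - 1) else 0)"
proof (cases l)
  case 0 then show ?thesis by (simp add: cf_def)
next
  case (Suc j)
  show ?thesis
  proof (cases "2 * l \<le> r")
    case True
    define p where "p = r - 2 * l"
    have r: "r = Suc (Suc (2*j + p))" using True Suc unfolding p_def by simp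
    have "l \<le> r div 2" using True by linarith
    then show ?thesis using cf_case2[of j p m] Suc r by simp
  next
    case False
    then have r: "r = Suc (2*j)" using l Suc by linarith
    have "\<not> l \<le> r div 2" using False by linarith
    then show ?thesis using cf_case3[of j m] Suc r by simp
  qed
qed

lemma prod_shift: "(\<Prod>k = 1..Suc r. real (m + k)) = real (Suc m) * (\<Prod>k = 1..r. real (Suc m + k))"
proof (induction r)
  case 0 then show ?case by simp
next
  case (Suc r)
  have "(\<Prod>k = 1..Suc (Suc r). real (m + k)) = (\<Prod>k = 1..Suc r. real (m + k)) * real (m + Suc (Suc r))"
    by (simp add: prod.cl_ivl_Suc)
  also have "\<dots> = real (Suc m) * ((\<Prod>k = 1..r. real (Suc m + k)) * real (Suc m + Suc r))"
    using Suc by simp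
  also have "(\<Prod>k = 1..r. real (Suc m + k)) * real (Suc m + Suc r) = (\<Prod>k = 1..Suc r. real (Suc m + k))"
    by (simp add: prod.cl_ivl_Suc)
  finally show ?case .
qed

lemma sum_if_le:
  fixes a :: "nat \<Rightarrow> complex"
  assumes "R \<le> S"
  shows "(\<Sum>l = 0..S. (if l \<le> R then a l else 0)) = (\<Sum>l = 0..R. a l)"
proof -
  have "{l \<in> {0..S}. l \<le> R} = {0..R}" using assms by auto
  then show ?thesis using sum.inter_filter[of "{0..S}" a "\<lambda>l. l \<le> R"] by simp
qed

lemma sum_if_ge1:
  fixes b :: "nat \<Rightarrow> complex"
  shows "(\<Sum>l = 0..Suc S. (if 1 \<le> l then b (l - 1) else 0)) = (\<Sum>l = 0..S. b l)"
proof -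
  have "{l \<in> {0..Suc S}. 1 \<le> l} = {Suc 0..Suc S}" by auto
  then have "(\<Sum>l = 0..Suc S. (if 1 \<le> l then b (l - 1) else 0)) = (\<Sum>l = Suc 0..Suc S. b (l - 1))"
    using sum.inter_filter[of "{0..Suc S}" "\<lambda>l. b (l - 1)" "\<lambda>l. 1 \<le> l"] by simp
  also have "\<dots> = (\<Sum>l = 0..S. b l)"
    by (subst sum.atLeast_Suc_atMost_Suc_shift) (simp add: o_def)
  finally show ?thesis .
qed





definition FF :: "(real \<Rightarrow> complex) \<Rightarrow> nat \<Rightarrow> nat \<Rightarrow> real \<Rightarrow> complex" where
  "FF f r m = (\<lambda>t. \<Sum>l = 0..r div 2. complex_of_real (cf r m l) * (Dop ^^ (r - 2 * l)) (Gfun f (m + r - l) 0) t)"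

lemma FF_rec:
  assumes f: "continuous_on {0..1} f" and t: "t \<in> {0<..<1}"
  shows "FF f (Suc r) m t = Dop (FF f r (Suc m)) t
     + complex_of_real (8 * real r * real (m + r + 1)) * FF f (r - 1) (Suc m) t"
proof -
  define X where "X l = (Dop ^^ (Suc r - 2 * l)) (Gfun f (m + Suc r - l) 0) t" for l
  define \<phi> where "\<phi> l = (Dop ^^ (r - 2 * l)) (Gfun f (Suc m + r - l) 0)" for l
  have d\<phi>: "(\<phi> l has_vector_derivative complex_of_real t * Dop (\<phi> l) t) (at t)"
    if l: "l \<in> {0..r div 2}" for l
  proof -
    have le: "r - 2 * l \<le> Suc m + r - l" by linarith
    have eq: "Suc m + r - l - (r - 2 * l) = Suc (m + l)" using l by auto
    have "spanG f (Suc (m + l)) (\<phi> l)"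
      using span_iter[OF f span_G0 le] unfolding eq \<phi>_def .
    then show ?thesis using span_Dop[OF f] t by blast
  qed
  have DX: "Dop (\<phi> l) t = X l" if l: "l \<in> {0..r div 2}" for l
  proof -
    have "Suc r - 2 * l = Suc (r - 2 * l)" "m + Suc r - l = Suc m + r - l" using l by auto
    then show ?thesis unfolding X_def \<phi>_def by simp
  qed
  have A: "Dop (FF f r (Suc m)) t = (\<Sum>l = 0..r div 2. complex_of_real (cf r (Suc m) l) * X l)"
  proof -
    have "FF f r (Suc m) = (\<lambda>s. \<Sum>l \<in> {0..r div 2}. complex_of_real (cf r (Suc m) l) * \<phi> l s)"
      unfolding FF_def \<phi>_def by simp
    then have "Dop (FF f r (Suc m)) t = (\<Sum>l \<in> {0..r div 2}. complex_of_real (cf r (Suc m) l) * Dop (\<phi> l) t)"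
      using Dop_sum[of "{0..r div 2}" \<phi> t] d\<phi> t by auto
    then show ?thesis using DX by simp
  qed
  have B: "complex_of_real (8 * real r * real (m + r + 1)) * FF f (r - 1) (Suc m) t
     = (\<Sum>l = 0..Suc r div 2. (if 1 \<le> l then complex_of_real (8 * real r * real (m + r + 1) * cf (r - 1) (Suc m) (l - 1)) else 0) * X l)"
  proof (cases r)
    case 0 then show ?thesis by simp
  next
    case (Suc r')
    have S: "Suc r div 2 = Suc (r' div 2)" using Suc by simp
    have "(\<Sum>l = 0..Suc r div 2. (if 1 \<le> l then complex_of_real (8 * real r * real (m + r + 1) * cf (r - 1) (Suc m) (l - 1)) else 0) * X l)
       = (\<Sum>l = 0..Suc r div 2. (if 1 \<le> l then complex_of_real (8 * real r * real (m + r + 1) * cf (r - 1) (Suc m) (l - 1)) * X (Suc (l - 1)) else 0))"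
      by (intro sum.cong) auto
    also have "\<dots> = (\<Sum>l = 0..r' div 2. complex_of_real (8 * real r * real (m + r + 1) * cf r' (Suc m) l) * X (Suc l))"
      unfolding S using Suc sum_if_ge1[of "\<lambda>l. complex_of_real (8 * real r * real (m + r + 1) * cf (r - 1) (Suc m) l) * X (Suc l)" "r' div 2"]
      by simp
    also have "\<dots> = complex_of_real (8 * real r * real (m + r + 1)) * FF f (r - 1) (Suc m) t"
    proof -
      have "X (Suc l) = (Dop ^^ (r' - 2 * l)) (Gfun f (Suc m + r' - l) 0) t" if "l \<in> {0..r' div 2}" for l
      proof -
        have "Suc r - 2 * Suc l = r' - 2 * l" "m + Suc r - Suc l = Suc m + r' - l" using that Suc by auto
        then show ?thesis unfolding X_def by simp
      qed
      then show ?thesis unfolding FF_def using Suc by (simp add: sum_distrib_left mult_ac)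
    qed
    finally show ?thesis by simp
  qed
  have C: "FF f (Suc r) m t = (\<Sum>l = 0..Suc r div 2. (if l \<le> r div 2 then complex_of_real (cf r (Suc m) l) else 0) * X l)
      + (\<Sum>l = 0..Suc r div 2. (if 1 \<le> l then complex_of_real (8 * real r * real (m + r + 1) * cf (r - 1) (Suc m) (l - 1)) else 0) * X l)"
  proof -
    have "FF f (Suc r) m t = (\<Sum>l = 0..Suc r div 2. complex_of_real (cf (Suc r) m l) * X l)"
      unfolding FF_def X_def by simp
    also have "\<dots> = (\<Sum>l = 0..Suc r div 2. (if l \<le> r div 2 then complex_of_real (cf r (Suc m) l) else 0) * X l
      + (if 1 \<le> l then complex_of_real (8 * real r * real (m + r + 1) * cf (r - 1) (Suc m) (l - 1)) else 0) * X l)"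
      by (intro sum.cong refl) (simp add: cf_rec distrib_right)
    finally show ?thesis by (simp add: sum.distrib)
  qed
  have C1: "(\<Sum>l = 0..Suc r div 2. (if l \<le> r div 2 then complex_of_real (cf r (Suc m) l) else 0) * X l)
     = (\<Sum>l = 0..r div 2. complex_of_real (cf r (Suc m) l) * X l)"
  proof -
    have "(\<Sum>l = 0..Suc r div 2. (if l \<le> r div 2 then complex_of_real (cf r (Suc m) l) else 0) * X l)
       = (\<Sum>l = 0..Suc r div 2. (if l \<le> r div 2 then complex_of_real (cf r (Suc m) l) * X l else 0))"
      by (intro sum.cong) auto
    also have "\<dots> = (\<Sum>l = 0..r div 2. complex_of_real (cf r (Suc m) l) * X l)"
      by (rule sum_if_le) linarith
    finally show ?thesis .
  qed
  show ?thesis using A B C C1 by simp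
qed





definition KK :: "nat \<Rightarrow> nat \<Rightarrow> complex" where
  "KK r m = complex_of_real (4 ^ r * (\<Prod>k = 1..r. real (m + k)))"

lemma KK1: "KK (Suc r) m = KK r (Suc m) * complex_of_real (4 * real (Suc m))"
  unfolding KK_def prod_shift by (simp add: algebra_simps)

lemma KK2: "complex_of_real (8 * real r * real (m + r + 1)) * KK (r - 1) (Suc m)
   = KK r (Suc m) * complex_of_real (2 * real r)"
proof (cases r)
  case 0 then show ?thesis by simp
next
  case (Suc r')
  have "(\<Prod>k = 1..Suc r'. real (Suc m + k)) = (\<Prod>k = 1..r'. real (Suc m + k)) * real (Suc m + Suc r')"
    by (simp add: prod.cl_ivl_Suc)
  then show ?thesis unfolding KK_def Suc by (simp add: algebra_simps)
qed

lemma main_ind: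
  assumes f: "continuous_on {0..1} f"
  shows "\<forall>m. \<forall>t\<in>{0<..<1}. FF f r m t = KK r m * Gfun f m r t"
proof (induction r rule: less_induct)
  case (less r)
  show ?case
  proof (cases r)
    case 0 then show ?thesis by (simp add: FF_def KK_def cf_def)
  next
    case (Suc q)
    show ?thesis unfolding Suc[symmetric]
    proof (intro allI ballI)
      fix m and t :: real assume t: "t \<in> {0<..<1}"
      have IH1: "\<forall>s\<in>{0<..<1}. FF f q (Suc m) s = KK q (Suc m) * Gfun f (Suc m) q s"
        using less.IH Suc by auto
      have IH2: "FF f (q - 1) (Suc m) t = KK (q - 1) (Suc m) * Gfun f (Suc m) (q - 1) t"
        using less.IH Suc t by auto
      have "((\<lambda>s. KK q (Suc m) * Gfun f (Suc m) q s) has_vector_derivative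
          complex_of_real t * (KK q (Suc m) * (complex_of_real (4 * real (Suc m)) * Gfun f m (Suc q) t
             - complex_of_real (2 * real q) * Gfun f (Suc m) (q - 1) t))) (at t)"
        using has_vector_derivative_mult_right[OF DG[OF f, of "Suc m" t q], of "KK q (Suc m)"] t
        by (simp add: mult_ac)
      then have D: "Dop (FF f q (Suc m)) t = KK q (Suc m) * (complex_of_real (4 * real (Suc m)) * Gfun f m (Suc q) t
             - complex_of_real (2 * real q) * Gfun f (Suc m) (q - 1) t)"
        by (rule Dop_cong) (use t IH1 in auto)
      have "FF f (Suc q) m t = Dop (FF f q (Suc m)) t
         + complex_of_real (8 * real q * real (m + q + 1)) * FF f (q - 1) (Suc m) t"
        by (rule FF_rec[OF f t])
      also have "\<dots> = KK (Suc q) m * Gfun f m (Suc q) t"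
      proof -
        have k2: "complex_of_real (8 * real q * real (m + q + 1)) * (KK (q - 1) (Suc m) * Gfun f (Suc m) (q - 1) t)
           = KK q (Suc m) * (complex_of_real (2 * real q) * Gfun f (Suc m) (q - 1) t)"
          using KK2[of q m] by (simp add: mult.assoc[symmetric])
        show ?thesis unfolding D IH2 KK1 k2 by (simp add: algebra_simps)
      qed
      finally show "FF f r m t = KK r m * Gfun f m r t" unfolding Suc .
    qed
  qed
qed


lemma smooth_cont:
  assumes "smooth_on_nonneg f"
  shows "continuous_on {0..1} f"
proof -
  obtain Df where D0: "Df 0 = f"
    and D: "\<forall>k. \<forall>x\<ge>0. (Df k has_vector_derivative Df (Suc k) x) (at x within {0..})"
    using assms unfolding smooth_on_nonneg_def by blast
  have "continuous_on {0..} f"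
    using D D0 by (intro continuous_on_vector_derivative[where f'="Df 1"]) auto
  then show ?thesis by (rule continuous_on_subset) auto
qed

theorem lemma3p6:
  fixes f :: "real \<Rightarrow> complex" and \<rho> t :: real and r m :: nat
  assumes "smooth_on_nonneg f"
    and "\<rho> < 1"
    and "\<forall>x\<ge>0. x > \<rho> \<longrightarrow> f x = 0"
    and "0 < t" and "t < 1"
  shows "(\<Sum>l = 0..r div 2.
            complex_of_real (2 ^ (2 * l) * fact r / (fact l * fact (r - 2 * l))
                             * fact (m + r) / fact (m + r - l))
            * (Dop ^^ (r - 2 * l)) (Gfun f (m + r - l) 0) t)
         = complex_of_real (4 ^ r * (\<Prod>k = 1..r. real (m + k))) * Gfun f m r t"
proof -
  have "FF f r m t = KK r m * Gfun f m r t"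
    using main_ind[OF smooth_cont[OF assms(1)], of r] assms(4,5) by auto
  then show ?thesis unfolding FF_def KK_def cf_def .
qed



end
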